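(* Let $\mathbb{F}$ be a field, $n\geq 1$, and let $\theta$ be a symplectic polarity of the projective space $\Delta=\mathsf{PG}(2n-1,\mathbb{F})$, viewed as a building of type $\mathsf{A}_{2n-1}$. Then for each odd $i$, no vertex of type $i$ is mapped by $\theta$ to an opposite vertex; and each vertex mapped to an opposite vertex is contained in a simplex of type $\{2,4,\ldots,2n-2\}$ that is mapped to an opposite simplex.
   Context: Vertices of type $i$ ($1\leq i\leq 2n-1$) of $\mathsf{PG}(2n-1,\mathbb{F})$ are the $i$-dimensional subspaces of $V=\mathbb{F}^{2n}$; simplices are flags. Two subspaces $U,U'$ are opposite iff $U+U'=V$ and $U\cap U'=0$; flags are opposite iff their members are pairwise opposite in this sense with complementary dimensions (equivalently, as simplices of the building). A symplectic polarity is a duality of the form $U^\theta=U^{\circ}=\{v: (u,v)=0\ \forall u\in U\}$ for a nondegenerate alternating form $(\cdot,\cdot)$ on $V$. *)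

theory Defs
  imports "HOL-Analysis.Analysis"
begin

text \<open>V = F^(2n) is modelled as the type 'a ^ 'm with 'a a field and CARD('m) = 2n.\<close>

definition alt_form :: "('a::field ^ 'm \<Rightarrow> 'a ^ 'm \<Rightarrow> 'a) \<Rightarrow> bool" where
  "alt_form B \<longleftrightarrow>
     (\<forall>x y z. B (x + y) z = B x z + B y z) \<and>
     (\<forall>x y z. B x (y + z) = B x y + B x z) \<and>
     (\<forall>c x y. B (c *s x) y = c * B x y) \<and>
     (\<forall>c x y. B x (c *s y) = c * B x y) \<and>
     (\<forall>x. B x x = 0)"

definition nondegenerate :: "('a::field ^ 'm \<Rightarrow> 'a ^ 'm \<Rightarrow> 'a) \<Rightarrow> bool" where
  "nondegenerate B \<longleftrightarrow> (\<forall>x. (\<forall>y. B x y = 0) \<longrightarrow> x = 0)"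

text \<open>The symplectic polarity: U maps to U-perp.\<close>
definition perp :: "('a::field ^ 'm \<Rightarrow> 'a ^ 'm \<Rightarrow> 'a) \<Rightarrow> ('a ^ 'm) set \<Rightarrow> ('a ^ 'm) set" where
  "perp B U = {v. \<forall>u\<in>U. B u v = 0}"

definition vertex :: "('a::field ^ 'm) set \<Rightarrow> bool" where
  "vertex U \<longleftrightarrow> vec.subspace U \<and> 1 \<le> vec.dim U \<and> vec.dim U < CARD('m)"

definition opposite :: "('a::field ^ 'm) set \<Rightarrow> ('a ^ 'm) set \<Rightarrow> bool" where
  "opposite U U' \<longleftrightarrow> {u + u' | u u'. u \<in> U \<and> u' \<in> U'} = UNIV \<and> U \<inter> U' = {0}"

text \<open>Simplices are flags: sets of pairwise incident (nested) vertices.\<close>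
definition flag :: "('a::field ^ 'm) set set \<Rightarrow> bool" where
  "flag F \<longleftrightarrow> (\<forall>U\<in>F. vertex U) \<and> (\<forall>U\<in>F. \<forall>W\<in>F. U \<subseteq> W \<or> W \<subseteq> U)"

definition flag_type :: "('a::field ^ 'm) set set \<Rightarrow> nat set" where
  "flag_type F = vec.dim ` F"

definition opposite_flags :: "('a::field ^ 'm) set set \<Rightarrow> ('a ^ 'm) set set \<Rightarrow> bool" where
  "opposite_flags F F' \<longleftrightarrow>
     flag_type F' = (\<lambda>d. CARD('m) - d) ` flag_type F \<and>
     (\<forall>U\<in>F. \<forall>U'\<in>F'. vec.dim U + vec.dim U' = CARD('m) \<longrightarrow> opposite U U')"

end

theory Submission
  imports Defs
begin

locale symp =
  fixes B :: "'a::field ^ 'm \<Rightarrow> 'a ^ 'm \<Rightarrow> 'a"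
  assumes alt: "alt_form B"
begin

lemma add1: "B (x + y) z = B x z + B y z" using alt unfolding alt_form_def by blast
lemma add2: "B x (y + z) = B x y + B x z" using alt unfolding alt_form_def by blast
lemma sc1: "B (c *s x) y = c * B x y" using alt unfolding alt_form_def by blast
lemma sc2: "B x (c *s y) = c * B x y" using alt unfolding alt_form_def by blast
lemma diag: "B x x = 0" using alt unfolding alt_form_def by blast

lemma zero1[simp]: "B 0 y = 0"
  using sc1[of 0 0 y] by simp
lemma zero2[simp]: "B x 0 = 0"
  using sc2[of x 0 0] by simp
lemma skew: "B x y = - B y x"
proof -
  have "0 = B (x + y) (x + y)" by (simp add: diag)
  also have "\<dots> = B x x + B x y + B y x + B y y" by (simp add: add1 add2)
  finally show ?thesis by (simp add: diag eq_neg_iff_add_eq_0 add.commute)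
qed
lemma neg1: "B (- x) y = - B x y"
  using sc1[of "-1" x y] by simp
lemma neg2: "B x (- y) = - B x y"
  using sc2[of x "-1" y] by simp
lemma diff1: "B (x - y) z = B x z - B y z"
  using add1[of x "-y" z] neg1 by simp
lemma diff2: "B x (y - z) = B x y - B x z"
  using add2[of x y "-z"] neg2 by simp
lemma sum1: "B (sum f S) x = (\<Sum>i\<in>S. B (f i) x)"
  by (induction S rule: infinite_finite_induct) (auto simp: add1)
lemma sum2: "B x (sum f S) = (\<Sum>i\<in>S. B x (f i))"
  by (induction S rule: infinite_finite_induct) (auto simp: add2)

lemma subspace_perp: "vec.subspace (perp B U)"
  unfolding vec.subspace_def perp_def by (auto simp: add2 sc2)

lemma subspace_left: "vec.subspace {y. B y v = 0}"
  unfolding vec.subspace_def by (auto simp: add1 sc1)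

lemma perp_span: "perp B (vec.span S) = {v. \<forall>s\<in>S. B s v = 0}"
proof
  show "perp B (vec.span S) \<subseteq> {v. \<forall>s\<in>S. B s v = 0}"
    unfolding perp_def using vec.span_base by blast
  show "{v. \<forall>s\<in>S. B s v = 0} \<subseteq> perp B (vec.span S)"
  proof
    fix v assume "v \<in> {v. \<forall>s\<in>S. B s v = 0}"
    then have "vec.span S \<subseteq> {y. B y v = 0}"
      by (intro vec.span_minimal subspace_left) auto
    then show "v \<in> perp B (vec.span S)" unfolding perp_def by auto
  qed
qed

definition SS :: "(('a ^ 'm) \<times> ('a ^ 'm)) set \<Rightarrow> ('a ^ 'm) set" where
  "SS P = fst ` P \<union> snd ` P"

definition spp :: "(('a ^ 'm) \<times> ('a ^ 'm)) set \<Rightarrow> bool" where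
  "spp P \<longleftrightarrow> finite P \<and> (\<forall>p\<in>P. \<forall>q\<in>P. B (fst p) (snd q) = (if p = q then 1 else 0)
      \<and> B (fst p) (fst q) = 0 \<and> B (snd p) (snd q) = 0)"

definition Pr :: "(('a ^ 'm) \<times> ('a ^ 'm)) set \<Rightarrow> 'a ^ 'm \<Rightarrow> 'a ^ 'm" where
  "Pr P v = (\<Sum>p\<in>P. B (fst p) v *s snd p - B (snd p) v *s fst p)"

lemma spp_subset: "spp P \<Longrightarrow> Q \<subseteq> P \<Longrightarrow> spp Q"
  unfolding spp_def using finite_subset by blast

lemma finite_SS: "spp P \<Longrightarrow> finite (SS P)"
  unfolding spp_def SS_def by auto

lemma fstB: assumes "spp P" "q \<in> P" "v \<in> SS P"
  shows "B (fst q) v = (if v = snd q then 1 else 0)"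
proof -
  have S: "\<And>p. p \<in> P \<Longrightarrow> B (fst q) (snd p) = (if q = p then 1 else 0) \<and> B (fst q) (fst p) = 0"
    using assms(1,2) unfolding spp_def by blast
  from assms(3) consider p where "p \<in> P" "v = fst p" | p where "p \<in> P" "v = snd p"
    unfolding SS_def by auto
  then show ?thesis
  proof cases
    case 1 then show ?thesis using S[of p] S[of q] assms(2) by auto
  next
    case 2 then show ?thesis using S[of p] S[of q] assms(2) by (cases "p = q") auto
  qed
qed

lemma sndB: assumes "spp P" "q \<in> P" "v \<in> SS P"
  shows "B (snd q) v = (if v = fst q then -1 else 0)"
proof -
  have S: "\<And>p. p \<in> P \<Longrightarrow> B (fst p) (snd q) = (if p = q then 1 else 0) \<and> B (snd q) (snd p) = 0"
    using assms(1,2) unfolding spp_def by blast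
  from assms(3) consider p where "p \<in> P" "v = fst p" | p where "p \<in> P" "v = snd p"
    unfolding SS_def by auto
  then show ?thesis
  proof cases
    case 1 then show ?thesis using S[of p] S[of q] assms(2) skew[of "snd q" "fst p"]
      by (cases "p = q") auto
  next
    case 2 then show ?thesis using S[of p] S[of q] assms(2) skew[of "snd q" "fst q"] by auto
  qed
qed


lemma Pr_span: "Pr P v \<in> vec.span (SS P)"
  unfolding Pr_def SS_def
  by (intro vec.span_sum vec.span_diff vec.span_scale vec.span_base) auto

lemma Pr_fst: assumes "spp P" "q \<in> P" shows "B (fst q) (Pr P v) = B (fst q) v"
proof -
  have "B (fst q) (Pr P v) = (\<Sum>p\<in>P. B (fst p) v * B (fst q) (snd p) - B (snd p) v * B (fst q) (fst p))"
    unfolding Pr_def by (simp add: sum2 diff2 sc2 mult.commute)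
  also have "\<dots> = (\<Sum>p\<in>P. if q = p then B (fst p) v else 0)"
    using assms unfolding spp_def by (intro sum.cong) auto
  also have "\<dots> = B (fst q) v" using assms unfolding spp_def by simp
  finally show ?thesis .
qed

lemma Pr_snd: assumes "spp P" "q \<in> P" shows "B (snd q) (Pr P v) = B (snd q) v"
proof -
  have "B (snd q) (Pr P v) = (\<Sum>p\<in>P. B (fst p) v * B (snd q) (snd p) - B (snd p) v * B (snd q) (fst p))"
    unfolding Pr_def by (simp add: sum2 diff2 sc2 mult.commute)
  also have "\<dots> = (\<Sum>p\<in>P. if q = p then B (snd p) v else 0)"
  proof (intro sum.cong refl)
    fix p assume p: "p \<in> P"
    have "B (snd q) (fst p) = - B (fst p) (snd q)" by (rule skew)
    then show "B (fst p) v * B (snd q) (snd p) - B (snd p) v * B (snd q) (fst p) = (if q = p then B (snd p) v else 0)"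
      using assms p unfolding spp_def by auto
  qed
  also have "\<dots> = B (snd q) v" using assms unfolding spp_def by simp
  finally show ?thesis .
qed

lemma Pr_perp: assumes "spp P" "s \<in> SS P" shows "B s (v - Pr P v) = 0"
  using assms Pr_fst Pr_snd unfolding SS_def by (auto simp: diff2)

lemma Pr_zero: "(\<And>s. s \<in> SS P \<Longrightarrow> B s v = 0) \<Longrightarrow> Pr P v = 0"
  unfolding Pr_def SS_def by (intro sum.neutral) auto

lemma Pr_add: "Pr P (x + y) = Pr P x + Pr P y"
  unfolding Pr_def by (simp add: add2 sum.distrib[symmetric] vec.scale_left_distrib algebra_simps)

lemma Pr_scale: "Pr P (c *s x) = c *s Pr P x"
  unfolding Pr_def by (simp add: sc2 vec.scale_sum_right vec.scale_right_diff_distrib)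

lemma Pr_base: assumes "spp P" "s \<in> SS P" shows "Pr P s = s"
proof -
  have fin: "finite P" using assms unfolding spp_def by auto
  from assms(2) consider q where "q \<in> P" "s = fst q" | q where "q \<in> P" "s = snd q"
    unfolding SS_def by auto
  then show ?thesis
  proof cases
    case 1
    have "Pr P s = (\<Sum>p\<in>P. if p = q then fst q else 0)"
      unfolding Pr_def
    proof (intro sum.cong refl)
      fix p assume p: "p \<in> P"
      have "B (snd p) (fst q) = - B (fst q) (snd p)" by (rule skew)
      then show "B (fst p) s *s snd p - B (snd p) s *s fst p = (if p = q then fst q else 0)"
        using assms(1) p 1 unfolding spp_def by auto
    qed
    also have "\<dots> = s" using 1 fin by simp
    finally show ?thesis .
  next
    case 2
    have "Pr P s = (\<Sum>p\<in>P. if p = q then snd q else 0)"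
      unfolding Pr_def
    proof (intro sum.cong refl)
      fix p assume p: "p \<in> P"
      show "B (fst p) s *s snd p - B (snd p) s *s fst p = (if p = q then snd q else 0)"
        using assms(1) p 2 unfolding spp_def by auto
    qed
    also have "\<dots> = s" using 2 fin by simp
    finally show ?thesis .
  qed
qed

lemma Pr_id: assumes "spp P" "v \<in> vec.span (SS P)" shows "Pr P v = v"
proof -
  have "vec.span (SS P) \<subseteq> {x. Pr P x = x}"
  proof (rule vec.span_minimal)
    show "SS P \<subseteq> {x. Pr P x = x}" using Pr_base[OF assms(1)] by auto
    show "vec.subspace {x. Pr P x = x}"
      unfolding vec.subspace_def using Pr_add Pr_scale Pr_zero[of P 0] by auto
  qed
  then show ?thesis using assms(2) by auto
qed

lemma opposite_span: assumes "spp P"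
  shows "opposite (vec.span (SS P)) (perp B (vec.span (SS P)))"
  unfolding opposite_def
proof
  show "{u + u' |u u'. u \<in> vec.span (SS P) \<and> u' \<in> perp B (vec.span (SS P))} = UNIV"
  proof -
    have "v \<in> {u + u' |u u'. u \<in> vec.span (SS P) \<and> u' \<in> perp B (vec.span (SS P))}" for v
    proof -
      have "v - Pr P v \<in> perp B (vec.span (SS P))"
        unfolding perp_span using Pr_perp[OF assms] by auto
      then show ?thesis using Pr_span[of P v] by (intro CollectI exI[of _ "Pr P v"] exI[of _ "v - Pr P v"]) auto
    qed
    then show ?thesis by auto
  qed
  show "vec.span (SS P) \<inter> perp B (vec.span (SS P)) = {0}"
  proof -
    have "v = 0" if "v \<in> vec.span (SS P)" "v \<in> perp B (vec.span (SS P))" for v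
    proof -
      have "Pr P v = v" using Pr_id[OF assms that(1)] .
      moreover have "Pr P v = 0" using that(2) unfolding perp_span by (intro Pr_zero) auto
      ultimately show ?thesis by simp
    qed
    moreover have "0 \<in> perp B (vec.span (SS P))" unfolding perp_def by simp
    ultimately show ?thesis using vec.span_zero by auto
  qed
qed

lemma indep: assumes "spp P" shows "vec.independent (SS P)"
proof
  assume "vec.dependent (SS P)"
  then obtain u v where v: "v \<in> SS P" "u v \<noteq> 0" and s: "(\<Sum>v\<in>SS P. u v *s v) = 0"
    using vec.dependent_finite[OF finite_SS[OF assms]] by auto
  have fin: "finite (SS P)" using finite_SS[OF assms] .
  have A: "u (snd q) = 0" if q: "q \<in> P" for q
  proof -
    have "0 = B (fst q) (\<Sum>v\<in>SS P. u v *s v)" using s by simp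
    also have "\<dots> = (\<Sum>w\<in>SS P. if w = snd q then u w else 0)"
      by (auto simp: sum2 sc2 fstB[OF assms q] intro!: sum.cong)
    also have "\<dots> = u (snd q)" using fin q unfolding SS_def by simp
    finally show ?thesis by simp
  qed
  have C: "u (fst q) = 0" if q: "q \<in> P" for q
  proof -
    have "0 = B (snd q) (\<Sum>v\<in>SS P. u v *s v)" using s by simp
    also have "\<dots> = (\<Sum>w\<in>SS P. if w = fst q then - u w else 0)"
      by (auto simp: sum2 sc2 sndB[OF assms q] intro!: sum.cong)
    also have "\<dots> = - u (fst q)" using fin q unfolding SS_def by simp
    finally show ?thesis by simp
  qed
  from v A C show False unfolding SS_def by auto
qed

lemma card_SS: assumes "spp P" shows "card (SS P) = 2 * card P"
proof -
  have fin: "finite P" using assms unfolding spp_def by auto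
  have one: "p \<in> P \<Longrightarrow> B (fst p) (snd p) = 1" for p using assms unfolding spp_def by auto
  have i1: "inj_on fst P"
  proof (rule inj_onI)
    fix p q assume "p \<in> P" "q \<in> P" "fst p = fst q"
    then show "p = q" using assms one[of q] unfolding spp_def by (metis one_neq_zero)
  qed
  have i2: "inj_on snd P"
  proof (rule inj_onI)
    fix p q assume "p \<in> P" "q \<in> P" "snd p = snd q"
    then show "p = q" using assms one[of q] unfolding spp_def by (metis one_neq_zero)
  qed
  have d: "fst ` P \<inter> snd ` P = {}"
  proof -
    have False if "p \<in> P" "q \<in> P" "fst p = snd q" for p q
      using that assms one[of q] unfolding spp_def by (metis one_neq_zero)
    then show ?thesis by auto
  qed
  show ?thesis unfolding SS_def
    using card_Un_disjoint[OF finite_imageI[OF fin] finite_imageI[OF fin] d]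
      card_image[OF i1] card_image[OF i2] by simp
qed

lemma dim_SS: assumes "spp P" shows "vec.dim (vec.span (SS P)) = 2 * card P"
  using vec.dim_span_eq_card_independent[OF indep[OF assms]] card_SS[OF assms] by simp


lemma spp_insert:
  assumes "spp P" "\<And>s. s \<in> SS P \<Longrightarrow> B s e = 0" "\<And>s. s \<in> SS P \<Longrightarrow> B s f = 0" "B e f = 1"
  shows "spp (insert (e, f) P)"
proof -
  have P: "\<And>p q. p \<in> P \<Longrightarrow> q \<in> P \<Longrightarrow> B (fst p) (snd q) = (if p = q then 1 else 0)
      \<and> B (fst p) (fst q) = 0 \<and> B (snd p) (snd q) = 0" using assms(1) unfolding spp_def by blast
  have fs: "p \<in> P \<Longrightarrow> fst p \<in> SS P" "p \<in> P \<Longrightarrow> snd p \<in> SS P" for p unfolding SS_def by auto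
  have ninP: "(e, f) \<notin> P" using assms(3)[of e] assms(4) fs[of "(e,f)"] by auto
  have e1: "B e s = 0" if "s \<in> SS P" for s using assms(2)[OF that] skew[of e s] by simp
  have f1: "B f s = 0" if "s \<in> SS P" for s using assms(3)[OF that] skew[of f s] by simp
  have fin: "finite (insert (e, f) P)" using assms(1) unfolding spp_def by simp
  have "\<forall>p\<in>insert (e, f) P. \<forall>q\<in>insert (e, f) P. B (fst p) (snd q) = (if p = q then 1 else 0) \<and> B (fst p) (fst q) = 0 \<and> B (snd p) (snd q) = 0"
  proof (intro ballI)
    fix p q assume p: "p \<in> insert (e, f) P" and q: "q \<in> insert (e, f) P"
    show "B (fst p) (snd q) = (if p = q then 1 else 0) \<and> B (fst p) (fst q) = 0 \<and> B (snd p) (snd q) = 0"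
    proof (cases "p = (e, f)")
      case True
      then show ?thesis
      proof (cases "q = (e,f)")
        case True then show ?thesis using \<open>p = (e,f)\<close> assms(4) diag by simp
      next
        case False then have "q \<in> P" using q by auto
        then show ?thesis using \<open>p = (e,f)\<close> e1 f1 fs False by auto
      qed
    next
      case False then have pP: "p \<in> P" using p by auto
      show ?thesis
      proof (cases "q = (e,f)")
        case True then show ?thesis using pP assms(2,3) fs ninP by auto
      next
        case False then have "q \<in> P" using q by auto
        then show ?thesis using P pP by blast
      qed
    qed
  qed
  then show ?thesis using fin unfolding spp_def by blast
qed

lemma extend:
  assumes W: "vec.subspace W" "W \<inter> perp B W = {0}"
  shows "distinct L0 \<Longrightarrow> spp (set L0) \<Longrightarrow> SS (set L0) \<subseteq> W \<Longrightarrow>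
    \<exists>L1. distinct (L0 @ L1) \<and> spp (set (L0 @ L1)) \<and> vec.span (SS (set (L0 @ L1))) = W"
proof (induction "vec.dim W - 2 * length L0" arbitrary: L0 rule: less_induct)
  case less
  have spW: "vec.span (SS (set L0)) \<subseteq> W" using vec.span_minimal[OF less.prems(3) W(1)] .
  show ?case
  proof (cases "vec.span (SS (set L0)) = W")
    case True then show ?thesis by (intro exI[of _ "[]"]) (use less.prems in auto)
  next
    case False
    then obtain v where v: "v \<in> W" "v \<notin> vec.span (SS (set L0))" using spW by auto
    define P where "P = set L0"
    have sppP: "spp P" using less.prems P_def by simp
    define e where "e = v - Pr P v"
    have eW: "e \<in> W" unfolding e_def using spW Pr_span[of P v] v(1) P_def
      by (intro vec.subspace_diff[OF W(1)]) auto
    have e0: "e \<noteq> 0" unfolding e_def using v(2) Pr_span[of P v] P_def by auto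
    have eperp: "\<And>s. s \<in> SS P \<Longrightarrow> B s e = 0" unfolding e_def using Pr_perp[OF sppP] by blast
    have "e \<notin> perp B W" using eW e0 W(2) by auto
    then obtain u where u: "u \<in> W" "B u e \<noteq> 0" unfolding perp_def by auto
    define f0 where "f0 = u - Pr P u"
    have f0W: "f0 \<in> W" unfolding f0_def using spW Pr_span[of P u] u(1) P_def
      by (intro vec.subspace_diff[OF W(1)]) auto
    have f0perp: "\<And>s. s \<in> SS P \<Longrightarrow> B s f0 = 0" unfolding f0_def using Pr_perp[OF sppP] by blast
    have "B (Pr P u) e = 0"
      unfolding Pr_def using eperp unfolding SS_def by (simp add: sum1 diff1 sc1)
    then have c: "B f0 e = B u e" unfolding f0_def by (simp add: diff1)
    define c where "c = B f0 e"
    have c0: "c \<noteq> 0" using c u(2) c_def by simp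
    define f where "f = (- inverse c) *s f0"
    have fW: "f \<in> W" unfolding f_def using vec.subspace_scale[OF W(1) f0W] .
    have ef: "B e f = 1" unfolding f_def using c0 skew[of e f0] c_def by (simp add: sc2 neg2)
    have fperp: "\<And>s. s \<in> SS P \<Longrightarrow> B s f = 0" unfolding f_def using f0perp by (simp add: sc2 neg2)
    define L0' where "L0' = L0 @ [(e, f)]"
    have sp': "spp (set L0')" unfolding L0'_def using spp_insert[OF sppP eperp fperp ef] P_def by simp
    have nin: "(e, f) \<notin> set L0" using fperp[of e] ef P_def unfolding SS_def by force
    have dist': "distinct L0'" unfolding L0'_def using less.prems(1) nin by simp
    have SS': "SS (set L0') \<subseteq> W" unfolding L0'_def using less.prems(3) eW fW unfolding SS_def by auto
    have "card (SS (set L0')) \<le> vec.dim W"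
      by (rule vec.independent_card_le_dim[OF SS' indep[OF sp']])
    then have le: "2 * length L0' \<le> vec.dim W"
      using card_SS[OF sp'] distinct_card[OF dist'] by simp
    have lt: "vec.dim W - 2 * length L0' < vec.dim W - 2 * length L0"
      using le unfolding L0'_def by simp
    from less.hyps[OF lt dist' sp' SS'] obtain L1 where
      "distinct (L0' @ L1) \<and> spp (set (L0' @ L1)) \<and> vec.span (SS (set (L0' @ L1))) = W" by blast
    then show ?thesis unfolding L0'_def by (intro exI[of _ "(e, f) # L1"]) simp
  qed
qed


lemma perp_complement:
  assumes "distinct L" "spp (set L)" "vec.span (SS (set L)) = UNIV"
  shows "perp B (vec.span (SS (set (take k L)))) = vec.span (SS (set (drop k L)))"
proof -
  define P where "P = set (take k L)"
  define Q where "Q = set (drop k L)"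
  have PQ: "set L = P \<union> Q" unfolding P_def Q_def by (metis append_take_drop_id set_append)
  have disj: "P \<inter> Q = {}" unfolding P_def Q_def using assms(1) set_take_disj_set_drop_if_distinct by blast
  have fin: "finite P" "finite Q" unfolding P_def Q_def by auto
  have sp: "spp (set L)" using assms(2) .
  have H: "\<And>p q. p \<in> set L \<Longrightarrow> q \<in> set L \<Longrightarrow> B (fst p) (snd q) = (if p = q then 1 else 0)
      \<and> B (fst p) (fst q) = 0 \<and> B (snd p) (snd q) = 0" using sp unfolding spp_def by blast
  show ?thesis unfolding P_def[symmetric] Q_def[symmetric]
  proof
    show "vec.span (SS Q) \<subseteq> perp B (vec.span (SS P))"
    proof (rule vec.span_minimal[OF _ subspace_perp])
      show "SS Q \<subseteq> perp B (vec.span (SS P))"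
        unfolding perp_span
      proof (intro subsetI CollectI ballI)
        fix t s assume t: "t \<in> SS Q" and s: "s \<in> SS P"
        from t obtain q where q: "q \<in> Q" "t = fst q \<or> t = snd q" unfolding SS_def by auto
        from s obtain p where p: "p \<in> P" "s = fst p \<or> s = snd p" unfolding SS_def by auto
        have pq: "p \<noteq> q" using p q disj by auto
        have pL: "p \<in> set L" "q \<in> set L" using p q PQ by auto
        have "B (snd p) (fst q) = - B (fst q) (snd p)" by (rule skew)
        then show "B s t = 0" using H[OF pL] H[OF pL(2,1)] pq p(2) q(2) by auto
      qed
    qed
    show "perp B (vec.span (SS P)) \<subseteq> vec.span (SS Q)"
    proof
      fix v assume v: "v \<in> perp B (vec.span (SS P))"
      have "v = Pr (set L) v" using Pr_id[OF sp] assms(3) by simp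
      also have "\<dots> = Pr P v + Pr Q v" unfolding Pr_def PQ using sum.union_disjoint[OF fin disj] by simp
      also have "Pr P v = 0" using v unfolding perp_span by (intro Pr_zero) auto
      finally have "v = Pr Q v" by simp
      then show "v \<in> vec.span (SS Q)" using Pr_span[of Q v] by simp
    qed
  qed
qed

end

lemma main:
  fixes B :: "'a::field ^ 'm \<Rightarrow> 'a ^ 'm \<Rightarrow> 'a" and n :: nat
  assumes "n \<ge> 1" and "CARD('m) = 2 * n"
    and "alt_form B" and "nondegenerate B"
  shows "(\<forall>U::('a ^ 'm) set. vertex U \<and> odd (vec.dim U) \<longrightarrow> \<not> opposite U (perp B U))
       \<and> (\<forall>U::('a ^ 'm) set. vertex U \<and> opposite U (perp B U) \<longrightarrow>
            (\<exists>F. flag F \<and> flag_type F = {2 * k | k. 1 \<le> k \<and> k \<le> n - 1} \<and> U \<in> F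
                 \<and> opposite_flags F (perp B ` F)))"
proof -
  interpret symp B using assms(3) by unfold_locales
  have basis: "\<exists>L. distinct L \<and> spp (set L) \<and> vec.span (SS (set L)) = U"
    if "vertex U" "opposite U (perp B U)" for U :: "('a ^ 'm) set"
  proof -
    have "vec.subspace U" using that(1) unfolding vertex_def by auto
    moreover have "U \<inter> perp B U = {0}" using that(2) unfolding opposite_def by auto
    moreover have "spp (set [])" unfolding spp_def by simp
    moreover have "SS (set []) \<subseteq> U" unfolding SS_def by simp
    ultimately show ?thesis using extend[of U "[]"] by auto
  qed
  have part1: "\<not> opposite U (perp B U)" if V: "vertex U" "odd (vec.dim U)" for U :: "('a ^ 'm) set"
  proof
    assume "opposite U (perp B U)"
    then obtain L where L: "distinct L" "spp (set L)" "vec.span (SS (set L)) = U"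
      using basis V(1) by blast
    have "vec.dim U = 2 * card (set L)" using dim_SS[OF L(2)] L(3) by simp
    then show False using V(2) by simp
  qed
  have part2: "\<exists>F. flag F \<and> flag_type F = {2 * k | k. 1 \<le> k \<and> k \<le> n - 1} \<and> U \<in> F
                 \<and> opposite_flags F (perp B ` F)"
    if U: "vertex U" "opposite U (perp B U)" for U :: "('a ^ 'm) set"
  proof -
    obtain L0 where L0: "distinct L0" "spp (set L0)" "vec.span (SS (set L0)) = U"
      using basis U by blast
    define m where "m = length L0"
    have dimU: "vec.dim U = 2 * m" using dim_SS[OF L0(2)] L0(3) distinct_card[OF L0(1)] m_def by simp
    have m: "1 \<le> m" "m \<le> n - 1" using U(1) dimU assms(2) unfolding vertex_def by auto
    have univ: "vec.subspace (UNIV :: ('a ^ 'm) set)" by simp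
    have nd: "UNIV \<inter> perp B UNIV = {0 :: 'a ^ 'm}"
    proof -
      have "v = 0" if "v \<in> perp B UNIV" for v
      proof -
        have "B v y = 0" for y using that skew[of v y] unfolding perp_def by simp
        then have "\<forall>y. B v y = 0" by blast
        then show ?thesis using assms(4) unfolding nondegenerate_def by blast
      qed
      moreover have "0 \<in> perp B UNIV" unfolding perp_def by simp
      ultimately show ?thesis by auto
    qed
    have sub: "SS (set L0) \<subseteq> UNIV" by simp
    obtain L1 where L1: "distinct (L0 @ L1)" "spp (set (L0 @ L1))" "vec.span (SS (set (L0 @ L1))) = UNIV"
      using extend[OF univ nd L0(1,2) sub] by (elim exE conjE)
    define L where "L = L0 @ L1"
    have L: "distinct L" "spp (set L)" "vec.span (SS (set L)) = UNIV" unfolding L_def by (rule L1(1), rule L1(2), rule L1(3))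
    have dU: "vec.dim (UNIV :: ('a ^ 'm) set) = 2 * length L"
    proof -
      have "vec.dim (vec.span (SS (set L))) = 2 * card (set L)" by (rule dim_SS[OF L(2)])
      then show ?thesis unfolding L(3) distinct_card[OF L(1)] .
    qed
    have "2 * length L = 2 * n" using dU vec_dim_card[where 'a='a and 'n='m] assms(2) by metis
    then have lenL: "length L = n" by simp
    define W where "W k = vec.span (SS (set (take k L)))" for k
    have sppk: "spp (set (take k L))" for k by (rule spp_subset[OF L(2) set_take_subset])
    have dimW: "vec.dim (W k) = 2 * k" if "k \<le> n" for k
      using dim_SS[OF sppk[of k]] distinct_card[OF distinct_take[OF L(1)], of k] that lenL
      unfolding W_def by simp
    have dimP: "vec.dim (perp B (W k)) = 2 * (n - k)" for k
      using perp_complement[OF L, of k] dim_SS[OF spp_subset[OF L(2) set_drop_subset]]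
        distinct_card[OF distinct_drop[OF L(1)], of k] lenL unfolding W_def by simp
    define F where "F = W ` {1..n-1}"
    have UF: "U \<in> F" unfolding F_def
    proof
      show "U = W m" unfolding W_def L_def m_def using L0(3) by simp
      show "m \<in> {1..n-1}" using m by simp
    qed
    have flagF: "flag F" unfolding flag_def F_def
    proof (intro conjI ballI)
      fix X assume "X \<in> W ` {1..n-1}"
      then obtain k where k: "k \<in> {1..n-1}" "X = W k" by auto
      show "vertex X" unfolding vertex_def k(2) using dimW[of k] k(1) assms(2) unfolding W_def by auto
    next
      fix X Y assume "X \<in> W ` {1..n-1}" "Y \<in> W ` {1..n-1}"
      then obtain k k' where "X = W k" "Y = W k'" by auto
      moreover have "W k \<subseteq> W k'" if "k \<le> k'" for k k'
        unfolding W_def by (intro vec.span_mono) (use set_take_subset_set_take[OF that, of L] in \<open>auto simp: SS_def\<close>)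
      ultimately show "X \<subseteq> Y \<or> Y \<subseteq> X" using nat_le_linear by blast
    qed
    have ft: "flag_type F = (\<lambda>k. 2 * k) ` {1..n-1}" unfolding flag_type_def F_def image_image
      using dimW by (intro image_cong) auto
    have ft2: "{2 * k | k. 1 \<le> k \<and> k \<le> n - 1} = (\<lambda>k. 2 * k) ` {1..n-1}" by auto
    have oppF: "opposite_flags F (perp B ` F)" unfolding opposite_flags_def
    proof (intro conjI ballI impI)
      have "flag_type (perp B ` F) = (\<lambda>k. 2 * (n - k)) ` {1..n-1}"
        unfolding flag_type_def F_def image_image using dimP by simp
      also have "\<dots> = (\<lambda>d. CARD('m) - d) ` flag_type F" unfolding ft image_image assms(2)
        by (intro image_cong) auto
      finally show "flag_type (perp B ` F) = (\<lambda>d. CARD('m) - d) ` flag_type F" .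
    next
      fix X Y assume X: "X \<in> F" and Y: "Y \<in> perp B ` F" and d: "vec.dim X + vec.dim Y = CARD('m)"
      from X obtain k where k: "k \<in> {1..n-1}" "X = W k" unfolding F_def by auto
      from Y obtain k' where k': "k' \<in> {1..n-1}" "Y = perp B (W k')" unfolding F_def by auto
      have kn: "k \<le> n" using k by auto
      have "2 * k + 2 * (n - k') = 2 * n" using d dimW[OF kn] dimP[of k'] k(2) k'(2) assms(2) by simp
      then have "k = k'" using k k' by auto
      then show "opposite X Y" using k k' opposite_span[OF sppk[of k]] unfolding W_def by simp
    qed
    show ?thesis using flagF ft ft2 UF oppF by auto
  qed
  show ?thesis using part1 part2 by blast
qed

theorem lemma3p4:
  fixes B :: "'a::field ^ 'm \<Rightarrow> 'a ^ 'm \<Rightarrow> 'a" and n :: nat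
  assumes "n \<ge> 1" and "CARD('m) = 2 * n"
    and "alt_form B" and "nondegenerate B"
  shows "(\<forall>U::('a ^ 'm) set. vertex U \<and> odd (vec.dim U) \<longrightarrow> \<not> opposite U (perp B U))
       \<and> (\<forall>U::('a ^ 'm) set. vertex U \<and> opposite U (perp B U) \<longrightarrow>
            (\<exists>F. flag F \<and> flag_type F = {2 * k | k. 1 \<le> k \<and> k \<le> n - 1} \<and> U \<in> F
                 \<and> opposite_flags F (perp B ` F)))"
  by (rule main[OF assms])

end
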